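(* Let $X$ be a uniformly convex Banach space with modulus of convexity $\delta$. If $u_k\rightharpoondown u$ in $X$ and $\|u_k\|\le1$ for all $k$, then $\|u\|<2$ and, for all sufficiently large $k$, $$\|u_k\|\ge\|u_k-u\|+\delta(\|u\|).$$
   Context: $u_k\rightharpoondown u$ (Δ-convergence) means: for every $y\in X$, $\limsup_{k\to\infty}(\|u_k-u\|-\|u_k-y\|)\le0$. The modulus of convexity is $\delta(\epsilon)=\inf\{1-\|\tfrac{x+y}2\|:\|x\|=\|y\|=1,\|x-y\|=\epsilon\}$ for $\epsilon\in[0,2]$, and uniform convexity means $\delta(\epsilon)>0$ for $\epsilon>0$. *)

theory Defs
  imports "HOL-Analysis.Analysis"
begin

definition delta_conv :: "(nat \<Rightarrow> 'a::real_normed_vector) \<Rightarrow> 'a \<Rightarrow> bool" where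
  "delta_conv uk u \<longleftrightarrow>
     (\<forall>y. limsup (\<lambda>k. ereal (norm (uk k - u) - norm (uk k - y))) \<le> 0)"

definition modulus_convexity :: "real \<Rightarrow> 'a::real_normed_vector itself \<Rightarrow> real" where
  "modulus_convexity \<epsilon> _ = Inf {1 - norm ((1/2) *\<^sub>R (x + y)) | x y :: 'a.
        norm x = 1 \<and> norm y = 1 \<and> norm (x - y) = \<epsilon>}"

definition uniformly_convex :: "'a::real_normed_vector itself \<Rightarrow> bool" where
  "uniformly_convex T \<longleftrightarrow> (\<forall>\<epsilon>. 0 < \<epsilon> \<and> \<epsilon> \<le> 2 \<longrightarrow> modulus_convexity \<epsilon> T > 0)"

end

theory Submission
  imports Defs
begin

lemma delta_le:
  fixes p u :: "'a::real_normed_vector"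
  assumes "norm p = 1" "norm (p - u) = 1"
  shows "modulus_convexity (norm u) TYPE('a) \<le> 1 - norm (p - (1/2) *\<^sub>R u)"
proof -
  let ?S = "{1 - norm ((1/2) *\<^sub>R (x + y)) | x y :: 'a.
        norm x = 1 \<and> norm y = 1 \<and> norm (x - y) = norm u}"
  have mem: "1 - norm (p - (1/2) *\<^sub>R u) \<in> ?S"
  proof -
    have h2: "(1/2) *\<^sub>R p + (1/2) *\<^sub>R p = p"
      by (metis field_sum_of_halves scaleR_add_left scaleR_one)
    have "(1/2) *\<^sub>R (p + (p - u)) = p - (1/2) *\<^sub>R u"
      using h2 by (simp add: scaleR_add_right scaleR_diff_right)
    moreover have "p - (p - u) = u" by simp
    ultimately show ?thesis using assms
      by (intro CollectI exI[of _ p] exI[of _ "p - u"]) auto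
  qed
  have "bdd_below ?S"
  proof (rule bdd_belowI[of _ 0], clarify)
    fix x y :: 'a assume h: "norm x = 1" "norm y = 1"
    have "norm ((1/2) *\<^sub>R (x + y)) \<le> (1/2) * (norm x + norm y)"
      using norm_triangle_ineq[of x y] by simp
    with h show "0 \<le> 1 - norm ((1/2) *\<^sub>R (x + y))" by simp
  qed
  then show ?thesis unfolding modulus_convexity_def using cInf_lower[OF mem] by blast
qed

lemma lower_mu:
  fixes x u :: "'a::real_normed_vector"
  assumes orth: "\<forall>\<rho>. m \<le> norm (x + \<rho> *\<^sub>R u)" and "0 \<le> \<mu>" "0 \<le> m"
  shows "\<mu> * m \<le> norm (\<mu> *\<^sub>R x + l *\<^sub>R u)"
proof (cases "\<mu> = 0")
  case True then show ?thesis by simp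
next
  case False
  then have mp: "\<mu> > 0" using assms by simp
  have "\<mu> *\<^sub>R x + l *\<^sub>R u = \<mu> *\<^sub>R (x + (l/\<mu>) *\<^sub>R u)"
    using mp by (simp add: algebra_simps)
  then have "norm (\<mu> *\<^sub>R x + l *\<^sub>R u) = \<mu> * norm (x + (l/\<mu>) *\<^sub>R u)" using mp by simp
  moreover have "m \<le> norm (x + (l/\<mu>) *\<^sub>R u)" using orth by blast
  ultimately show ?thesis using mp by (simp add: mult_left_mono)
qed

lemma witness:
  fixes x u :: "'a::real_normed_vector"
  assumes u0: "u \<noteq> 0" and m0: "0 < m" and orth: "\<forall>\<rho>. m \<le> norm (x + \<rho> *\<^sub>R u)"
    and a0: "0 \<le> a" and n1: "norm (a *\<^sub>R x + b *\<^sub>R u) \<le> 1"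
    and n2: "norm (a *\<^sub>R x + (b - 1) *\<^sub>R u) \<le> 1"
  shows "\<exists>p. norm p = 1 \<and> norm (p - u) = 1 \<and> a * m \<le> norm (p - (1/2) *\<^sub>R u)"
proof -
  define C where "C = {z::real\<times>real. 0 \<le> fst z \<and> norm (fst z *\<^sub>R x + snd z *\<^sub>R u) \<le> 1
     \<and> norm (fst z *\<^sub>R x + (snd z - 1) *\<^sub>R u) \<le> 1}"
  have t0: "norm u > 0" using u0 by simp
  define B where "B = (1 + norm x / m) / norm u"
  have bnd: "fst z \<le> 1/m \<and> \<bar>snd z\<bar> \<le> B" if zC: "z \<in> C" for z
  proof -
    have f0: "0 \<le> fst z" and nz: "norm (fst z *\<^sub>R x + snd z *\<^sub>R u) \<le> 1" using zC by (auto simp: C_def)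
    have "fst z * m \<le> 1" using lower_mu[OF orth f0, of "snd z"] m0 nz by linarith
    then have f1: "fst z \<le> 1/m" using m0 by (simp add: field_simps)
    have "norm (snd z *\<^sub>R u) \<le> norm (fst z *\<^sub>R x + snd z *\<^sub>R u) + norm (fst z *\<^sub>R x)"
      by (metis add_diff_cancel_left' norm_triangle_ineq4 add.commute)
    also have "\<dots> \<le> 1 + fst z * norm x" using nz f0 by simp
    also have "\<dots> \<le> 1 + norm x / m"
      using f1 mult_right_mono[OF f1 norm_ge_zero[of x]] by simp
    finally have "\<bar>snd z\<bar> * norm u \<le> 1 + norm x / m" by simp
    then have "\<bar>snd z\<bar> \<le> B" unfolding B_def using t0 by (simp add: field_simps)
    then show ?thesis using f1 by simp
  qed
  have "C \<subseteq> cbox (0, -B) (1/m, B)"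
  proof
    fix z assume zC: "z \<in> C"
    obtain z1 z2 where zz: "z = (z1, z2)" by fastforce
    show "z \<in> cbox (0, -B) (1/m, B)" using bnd[OF zC] zC unfolding zz cbox_Pair_eq
      by (auto simp: C_def)
  qed
  then have bC: "bounded C" using bounded_cbox bounded_subset by blast
  have cC: "closed C" unfolding C_def
    by (intro closed_Collect_conj closed_Collect_le continuous_intros)
  have kC: "compact C" using bC cC compact_eq_bounded_closed by blast
  have abC: "(a, b) \<in> C" using a0 n1 n2 by (simp add: C_def)
  obtain z where zC: "z \<in> C" and zmax: "\<forall>y\<in>C. fst y \<le> fst z"
    using continuous_attains_sup[OF kC _ continuous_on_fst[OF continuous_on_id]] abC by blast
  obtain \<mu> l where zz: "z = (\<mu>, l)" by fastforce
  have mu0: "0 \<le> \<mu>" and np: "norm (\<mu> *\<^sub>R x + l *\<^sub>R u) \<le> 1"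
    and nq: "norm (\<mu> *\<^sub>R x + (l - 1) *\<^sub>R u) \<le> 1" using zC by (auto simp: zz C_def)
  have amu: "a \<le> \<mu>" using zmax abC zz by force
  define p where "p = \<mu> *\<^sub>R x + l *\<^sub>R u"
  have pu: "p - u = \<mu> *\<^sub>R x + (l - 1) *\<^sub>R u" by (simp add: p_def algebra_simps)
  have raise: False if bb0: "bb > 0" and h1: "norm (\<mu> *\<^sub>R x + l' *\<^sub>R u) \<le> 1 - bb"
      and h2: "norm (\<mu> *\<^sub>R x + (l' - 1) *\<^sub>R u) \<le> 1 - bb" for l' bb
  proof -
    define \<eta> where "\<eta> = bb / (norm x + 1)"
    have eta0: "\<eta> > 0" using bb0 unfolding \<eta>_def
      by (intro divide_pos_pos) (auto simp: add_nonneg_pos)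
    have etax: "\<eta> * norm x \<le> bb"
    proof -
      have "\<eta> * norm x \<le> \<eta> * (norm x + 1)" using eta0 by simp
      also have "\<dots> = bb" unfolding \<eta>_def
        using norm_ge_zero[of x] by (metis add_nonneg_pos nonzero_mult_div_cancel_right order_less_irrefl times_divide_eq_left zero_less_one)
      finally show ?thesis .
    qed
    have e1: "(\<mu> + \<eta>) *\<^sub>R x + l' *\<^sub>R u = (\<mu> *\<^sub>R x + l' *\<^sub>R u) + \<eta> *\<^sub>R x"
      by (simp add: algebra_simps)
    have e2: "(\<mu> + \<eta>) *\<^sub>R x + (l' - 1) *\<^sub>R u = (\<mu> *\<^sub>R x + (l' - 1) *\<^sub>R u) + \<eta> *\<^sub>R x"
      by (simp add: algebra_simps)
    have "norm ((\<mu> + \<eta>) *\<^sub>R x + l' *\<^sub>R u) \<le> 1"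
      unfolding e1 using norm_triangle_ineq[of "\<mu> *\<^sub>R x + l' *\<^sub>R u" "\<eta> *\<^sub>R x"] h1 etax eta0
      by simp
    moreover have "norm ((\<mu> + \<eta>) *\<^sub>R x + (l' - 1) *\<^sub>R u) \<le> 1"
      unfolding e2 using norm_triangle_ineq[of "\<mu> *\<^sub>R x + (l' - 1) *\<^sub>R u" "\<eta> *\<^sub>R x"] h2 etax eta0
      by simp
    ultimately have "(\<mu> + \<eta>, l') \<in> C" using mu0 eta0 by (simp add: C_def)
    then have "\<mu> + \<eta> \<le> \<mu>" using zmax zz by force
    then show False using eta0 by simp
  qed
  have p1: "norm p = 1"
  proof (rule ccontr)
    assume "norm p \<noteq> 1"
    then have lt: "norm p < 1" using np p_def by simp
    define c where "c = 1 - norm p"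
    have c0: "c > 0" using lt c_def by simp
    define \<epsilon> where "\<epsilon> = min (1/2) (c / (2 * norm u))"
    have eps0: "\<epsilon> > 0" using c0 t0 by (simp add: \<epsilon>_def)
    have eps1: "\<epsilon> < 1" by (simp add: \<epsilon>_def)
    have epsu: "\<epsilon> * norm u \<le> c / 2"
    proof -
      have "\<epsilon> * norm u \<le> (c / (2 * norm u)) * norm u"
        using t0 by (intro mult_right_mono) (auto simp: \<epsilon>_def)
      then show ?thesis using t0 by simp
    qed
    have A: "\<mu> *\<^sub>R x + (l + \<epsilon>) *\<^sub>R u = p + \<epsilon> *\<^sub>R u" by (simp add: p_def algebra_simps)
    have B: "\<mu> *\<^sub>R x + (l + \<epsilon> - 1) *\<^sub>R u = (1 - \<epsilon>) *\<^sub>R (p - u) + \<epsilon> *\<^sub>R p"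
      by (simp add: p_def algebra_simps)
    have nA: "norm (\<mu> *\<^sub>R x + (l + \<epsilon>) *\<^sub>R u) \<le> 1 - c/2"
      unfolding A
    proof -
      have "norm (\<epsilon> *\<^sub>R u) = \<epsilon> * norm u" using eps0 by simp
      then show "norm (p + \<epsilon> *\<^sub>R u) \<le> 1 - c/2"
        using norm_triangle_ineq[of p "\<epsilon> *\<^sub>R u"] epsu c_def by linarith
    qed
    have "norm ((1 - \<epsilon>) *\<^sub>R (p - u) + \<epsilon> *\<^sub>R p) \<le> (1 - \<epsilon>) * norm (p - u) + \<epsilon> * norm p"
      using norm_triangle_ineq[of "(1 - \<epsilon>) *\<^sub>R (p - u)" "\<epsilon> *\<^sub>R p"] eps0 eps1 by simp
    also have "\<dots> \<le> (1 - \<epsilon>) * 1 + \<epsilon> * (1 - c)"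
      using nq pu eps0 eps1 c_def by (intro add_mono mult_left_mono) auto
    finally have nB: "norm (\<mu> *\<^sub>R x + (l + \<epsilon> - 1) *\<^sub>R u) \<le> 1 - \<epsilon> * c"
      unfolding B by (simp add: algebra_simps)
    show False
      by (rule raise[of "min (c/2) (\<epsilon> * c)" "l + \<epsilon>"]) (use nA nB c0 mult_pos_pos[OF eps0 c0] in auto)
  qed
  have q1: "norm (p - u) = 1"
  proof (rule ccontr)
    assume "norm (p - u) \<noteq> 1"
    then have lt: "norm (p - u) < 1" using nq pu by simp
    define c where "c = 1 - norm (p - u)"
    have c0: "c > 0" using lt c_def by simp
    define \<epsilon> where "\<epsilon> = min (1/2) (c / (2 * norm u))"
    have eps0: "\<epsilon> > 0" using c0 t0 by (simp add: \<epsilon>_def)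
    have eps1: "\<epsilon> < 1" by (simp add: \<epsilon>_def)
    have epsu: "\<epsilon> * norm u \<le> c / 2"
    proof -
      have "\<epsilon> * norm u \<le> (c / (2 * norm u)) * norm u"
        using t0 by (intro mult_right_mono) (auto simp: \<epsilon>_def)
      then show ?thesis using t0 by simp
    qed
    have A: "\<mu> *\<^sub>R x + (l - \<epsilon> - 1) *\<^sub>R u = (p - u) - \<epsilon> *\<^sub>R u" by (simp add: p_def algebra_simps)
    have B: "\<mu> *\<^sub>R x + (l - \<epsilon>) *\<^sub>R u = (1 - \<epsilon>) *\<^sub>R p + \<epsilon> *\<^sub>R (p - u)"
      by (simp add: p_def algebra_simps)
    have nA: "norm (\<mu> *\<^sub>R x + (l - \<epsilon> - 1) *\<^sub>R u) \<le> 1 - c/2"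
      unfolding A
    proof -
      have "norm (\<epsilon> *\<^sub>R u) = \<epsilon> * norm u" using eps0 by simp
      then show "norm (p - u - \<epsilon> *\<^sub>R u) \<le> 1 - c/2"
        using norm_triangle_ineq4[of "p - u" "\<epsilon> *\<^sub>R u"] epsu c_def by linarith
    qed
    have "norm ((1 - \<epsilon>) *\<^sub>R p + \<epsilon> *\<^sub>R (p - u)) \<le> (1 - \<epsilon>) * norm p + \<epsilon> * norm (p - u)"
      using norm_triangle_ineq[of "(1 - \<epsilon>) *\<^sub>R p" "\<epsilon> *\<^sub>R (p - u)"] eps0 eps1 by simp
    also have "\<dots> \<le> (1 - \<epsilon>) * 1 + \<epsilon> * (1 - c)"
      using p1 eps0 eps1 c_def by (intro add_mono mult_left_mono) auto
    finally have nB: "norm (\<mu> *\<^sub>R x + (l - \<epsilon>) *\<^sub>R u) \<le> 1 - \<epsilon> * c"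
      unfolding B by (simp add: algebra_simps)
    show False
      by (rule raise[of "min (c/2) (\<epsilon> * c)" "l - \<epsilon>"]) (use nA nB c0 mult_pos_pos[OF eps0 c0] in auto)
  qed
  have "p - (1/2) *\<^sub>R u = \<mu> *\<^sub>R x + (l - 1/2) *\<^sub>R u" by (simp add: p_def algebra_simps)
  then have "\<mu> * m \<le> norm (p - (1/2) *\<^sub>R u)" using lower_mu[OF orth mu0] m0 by simp
  moreover have "a * m \<le> \<mu> * m" using amu m0 by simp
  ultimately show ?thesis using p1 q1 by force
qed

lemma single_ev:
  fixes uk :: "nat \<Rightarrow> 'a::real_normed_vector"
  assumes conv: "delta_conv uk u" and e0: "e > 0"
  shows "eventually (\<lambda>k. norm (uk k - u) - norm (uk k - y) < e) sequentially"
proof -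
  have "limsup (\<lambda>k. ereal (norm (uk k - u) - norm (uk k - y))) \<le> 0"
    using conv by (simp add: delta_conv_def)
  also have "\<dots> < ereal e" using e0 by simp
  finally have "eventually (\<lambda>k. ereal (norm (uk k - u) - norm (uk k - y)) < ereal e) sequentially"
    by (rule Limsup_lessD)
  then show ?thesis by simp
qed

lemma orth_ev:
  fixes uk :: "nat \<Rightarrow> 'a::real_normed_vector"
  assumes conv: "delta_conv uk u" and bnd: "\<And>k. norm (uk k) \<le> 1" and u0: "u \<noteq> 0" and e0: "e > 0"
  shows "eventually (\<lambda>k. \<forall>\<rho>. norm (uk k - u) - e \<le> norm (uk k - u + \<rho> *\<^sub>R u)) sequentially"
proof -
  define t where "t = norm u"
  have t0: "t > 0" using u0 by (simp add: t_def)
  define h where "h = e / (2 * t)"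
  have h0: "h > 0" using t0 e0 by (simp add: h_def)
  have ht: "h * t = e / 2" using t0 by (simp add: h_def)
  define N where "N = nat \<lceil>2 * (1 + t) / (t * h)\<rceil>"
  have N1: "2 * (1 + t) / (t * h) \<le> real N" unfolding N_def by linarith
  have Nht: "2 * (1 + t) \<le> real N * h * t"
  proof -
    have "2 * (1 + t) = (2 * (1 + t) / (t * h)) * (t * h)" using t0 h0 by simp
    also have "\<dots> \<le> real N * (t * h)" using N1 t0 h0 by (intro mult_right_mono) auto
    finally show ?thesis by (simp add: mult_ac)
  qed
  define G where "G = {- int N .. int N}"
  have fG: "finite G" by (simp add: G_def)
  have "eventually (\<lambda>k. \<forall>j\<in>G. norm (uk k - u) - norm (uk k - u + (real_of_int j * h) *\<^sub>R u) < e/2) sequentially"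
  proof (rule eventually_ball_finite[OF fG], rule ballI)
    fix j assume "j \<in> G"
    have eqk: "uk k - (u - (real_of_int j * h) *\<^sub>R u) = uk k - u + (real_of_int j * h) *\<^sub>R u" for k
      by (simp add: algebra_simps)
    then show "eventually (\<lambda>k. norm (uk k - u) - norm (uk k - u + (real_of_int j * h) *\<^sub>R u) < e/2) sequentially"
      using single_ev[OF conv, of "e/2" "u - (real_of_int j * h) *\<^sub>R u"] e0 by (simp only: eqk)
  qed
  then show ?thesis
  proof (rule eventually_mono, intro allI)
    fix k \<rho>
    assume grid: "\<forall>j\<in>G. norm (uk k - u) - norm (uk k - u + (real_of_int j * h) *\<^sub>R u) < e/2"
    define x where "x = uk k - u"
    have nx: "norm x \<le> 1 + t" unfolding x_def t_def
      using norm_triangle_ineq4[of "uk k" u] bnd[of k] by linarith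
    show "norm (uk k - u) - e \<le> norm (uk k - u + \<rho> *\<^sub>R u)"
    proof (cases "\<bar>\<rho>\<bar> \<le> real N * h")
      case True
      define j where "j = \<lfloor>\<rho> / h\<rfloor>"
      have j1: "real_of_int j * h \<le> \<rho>" and j2: "\<rho> < real_of_int j * h + h"
      proof -
        have "real_of_int j \<le> \<rho> / h" "\<rho> / h < real_of_int j + 1" unfolding j_def by linarith+
        then show "real_of_int j * h \<le> \<rho>" "\<rho> < real_of_int j * h + h"
          using h0 by (simp_all add: field_simps)
      qed
      have "- real N \<le> \<rho> / h" "\<rho> / h \<le> real N" using True h0 by (simp_all add: field_simps abs_le_iff)
      then have "j \<in> G" unfolding G_def j_def by (auto intro: floor_le_iff[THEN iffD2] le_floor_iff[THEN iffD2])
      then have g: "norm x - norm (x + (real_of_int j * h) *\<^sub>R u) < e/2" using grid by (simp add: x_def)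
      have eq: "x + \<rho> *\<^sub>R u = (x + (real_of_int j * h) *\<^sub>R u) + (\<rho> - real_of_int j * h) *\<^sub>R u"
        by (simp add: algebra_simps)
      have "norm ((\<rho> - real_of_int j * h) *\<^sub>R u) = (\<rho> - real_of_int j * h) * t"
        using j1 by (simp add: t_def)
      also have "\<dots> \<le> h * t" using j2 t0 by (intro mult_right_mono) auto
      finally have sm: "norm ((\<rho> - real_of_int j * h) *\<^sub>R u) \<le> e/2" using ht by simp
      have "norm (x + (real_of_int j * h) *\<^sub>R u) \<le> norm (x + \<rho> *\<^sub>R u) + norm ((\<rho> - real_of_int j * h) *\<^sub>R u)"
        using norm_triangle_ineq4[of "x + \<rho> *\<^sub>R u" "(\<rho> - real_of_int j * h) *\<^sub>R u"]
        by (simp add: algebra_simps)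
      then show ?thesis using g sm by (simp add: x_def)
    next
      case False
      have "real N * h * t \<le> \<bar>\<rho>\<bar> * t" using False t0 by (intro mult_right_mono) auto
      also have "\<dots> = norm (\<rho> *\<^sub>R u)" by (simp add: t_def)
      also have "\<dots> \<le> norm (x + \<rho> *\<^sub>R u) + norm x"
        using norm_triangle_ineq4[of "x + \<rho> *\<^sub>R u" x] by simp
      finally have "2 * (1 + t) \<le> norm (x + \<rho> *\<^sub>R u) + norm x" using Nht by linarith
      then show ?thesis using nx e0 by (simp add: x_def)
    qed
  qed
qed

lemma delta_half:
  fixes u :: "'a::real_normed_vector"
  assumes dim2: "\<exists>x y :: 'a. x \<noteq> 0 \<and> (\<forall>c. y \<noteq> c *\<^sub>R x)"
    and u0: "u \<noteq> 0" and t2: "norm u \<le> 2"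
  shows "modulus_convexity (norm u) TYPE('a) \<le> norm u / 2"
proof -
  define t where "t = norm u"
  have t0: "t > 0" using u0 by (simp add: t_def)
  obtain x0 y0 :: 'a where x0: "x0 \<noteq> 0" and y0: "\<forall>c. y0 \<noteq> c *\<^sub>R x0" using dim2 by blast
  obtain w where w: "\<forall>\<rho>. w + \<rho> *\<^sub>R u \<noteq> 0"
  proof (cases "\<exists>\<rho>0. x0 = \<rho>0 *\<^sub>R u")
    case True
    then obtain \<rho>0 where r0: "x0 = \<rho>0 *\<^sub>R u" by blast
    then have "\<rho>0 \<noteq> 0" using x0 by auto
    have "y0 + \<rho> *\<^sub>R u \<noteq> 0" for \<rho>
    proof
      assume "y0 + \<rho> *\<^sub>R u = 0"
      then have "y0 = (- \<rho> / \<rho>0) *\<^sub>R x0" using r0 \<open>\<rho>0 \<noteq> 0\<close>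
        by (simp add: eq_neg_iff_add_eq_0[symmetric])
      then show False using y0 by blast
    qed
    then show ?thesis using that by blast
  next
    case False
    have "x0 + \<rho> *\<^sub>R u \<noteq> 0" for \<rho>
    proof
      assume "x0 + \<rho> *\<^sub>R u = 0"
      then have "x0 = (- \<rho>) *\<^sub>R u" by (simp add: eq_neg_iff_add_eq_0[symmetric])
      then show False using False by blast
    qed
    then show ?thesis using that by blast
  qed
  define R where "R = 2 * norm w / t"
  have R0: "R \<ge> 0" using t0 by (simp add: R_def)
  have cont: "continuous_on {-R..R} (\<lambda>\<rho>. norm (w + \<rho> *\<^sub>R u))"
    by (intro continuous_intros)
  obtain \<rho>1 where r1: "\<rho>1 \<in> {-R..R}" and r1min: "\<forall>\<rho>\<in>{-R..R}. norm (w + \<rho>1 *\<^sub>R u) \<le> norm (w + \<rho> *\<^sub>R u)"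
    using continuous_attains_inf[OF compact_Icc _ cont] R0 by auto
  define m where "m = norm (w + \<rho>1 *\<^sub>R u)"
  have m0: "m > 0" using w by (simp add: m_def)
  have mw: "m \<le> norm w" using r1min[rule_format, of 0] R0 by (simp add: m_def)
  have orth: "\<forall>\<rho>. m \<le> norm (w + \<rho> *\<^sub>R u)"
  proof
    fix \<rho>
    show "m \<le> norm (w + \<rho> *\<^sub>R u)"
    proof (cases "\<rho> \<in> {-R..R}")
      case True then show ?thesis using r1min by (simp add: m_def)
    next
      case False
      then have "R \<le> \<bar>\<rho>\<bar>" by auto
      then have "R * t \<le> \<bar>\<rho>\<bar> * t" using t0 by (intro mult_right_mono) auto
      moreover have "R * t = 2 * norm w" using t0 by (simp add: R_def)
      moreover have "\<bar>\<rho>\<bar> * t \<le> norm (w + \<rho> *\<^sub>R u) + norm w"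
        using norm_triangle_ineq4[of "w + \<rho> *\<^sub>R u" w] by (simp add: t_def)
      ultimately show ?thesis using mw by linarith
    qed
  qed
  have n1: "norm (0 *\<^sub>R w + (1/2) *\<^sub>R u) \<le> 1" using t2 by simp
  have n2: "norm (0 *\<^sub>R w + (1/2 - 1) *\<^sub>R u) \<le> 1" using t2 by simp
  obtain p where p1: "norm p = 1" and p2: "norm (p - u) = 1"
    using witness[OF u0 m0 orth order_refl n1 n2] by auto
  have "modulus_convexity (norm u) TYPE('a) \<le> 1 - norm (p - (1/2) *\<^sub>R u)"
    by (rule delta_le[OF p1 p2])
  also have "\<dots> \<le> norm u / 2"
    using norm_triangle_ineq2[of p "(1/2) *\<^sub>R u"] p1 by simp
  finally show ?thesis .
qed

lemma main_step:
  fixes x u :: "'a::real_normed_vector"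
  assumes u0: "u \<noteq> 0" and t2: "norm u < 2" and r1: "norm (x + u) \<le> 1"
    and orth: "\<forall>\<rho>. norm x - e \<le> norm (x + \<rho> *\<^sub>R u)"
    and dpos: "modulus_convexity (norm u) TYPE('a) > 0"
    and dhalf: "modulus_convexity (norm u) TYPE('a) \<le> norm u / 2"
    and e0: "0 < e" and e1: "e \<le> norm u / 8"
    and e2: "e \<le> (norm u / 4) * modulus_convexity (norm u) TYPE('a) / 2"
    and e3: "e \<le> (norm u / 4) * (modulus_convexity (norm u) TYPE('a))^2 / 8"
    and e4: "e \<le> modulus_convexity (norm u) TYPE('a) * (1 - norm u / 2) / 4"
  shows "norm x + modulus_convexity (norm u) TYPE('a) \<le> norm (x + u)"
proof -
  define t where "t = norm u"
  define dt where "dt = modulus_convexity t TYPE('a)"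
  define c where "c = norm x"
  define r where "r = norm (x + u)"
  define c0 where "c0 = t / 4"
  have t0: "t > 0" using u0 by (simp add: t_def)
  have tri: "t \<le> r + c" unfolding t_def r_def c_def
    using norm_triangle_ineq4[of "x + u" x] by simp
  have cre: "c \<le> r + e" using orth[rule_format, of 1] by (simp add: c_def r_def)
  note defs = dt_def[symmetric] t_def[symmetric] c_def[symmetric] r_def[symmetric]
  have dt0: "dt > 0" and dth: "dt \<le> t/2" using dpos dhalf by (simp_all add: defs)
  have E1: "e \<le> c0/2" and E2: "e \<le> c0 * dt / 2" and E3: "e \<le> c0 * dt^2 / 8"
    and E4: "e \<le> dt * (1 - t/2) / 4"
    using e1 e2 e3 e4 by (simp_all add: defs c0_def)
  have r1': "r \<le> 1" using r1 by (simp add: r_def)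
  show ?thesis unfolding defs
  proof (cases "c \<le> c0")
    case True
    then show "c + dt \<le> r" using tri dth by (simp add: c0_def)
  next
    case False
    then have cc0: "c > c0" by simp
    have c00: "c0 > 0" using t0 by (simp add: c0_def)
    define m where "m = c - e"
    have m0: "m > 0" using cc0 E1 c00 by (simp add: m_def)
    have orth': "\<forall>\<rho>. m \<le> norm (x + \<rho> *\<^sub>R u)" using orth by (simp add: m_def c_def)
    have wit: "dt \<le> 1 - a * m" if a0: "0 \<le> a" and n1: "norm (a *\<^sub>R x + b *\<^sub>R u) \<le> 1"
        and n2: "norm (a *\<^sub>R x + (b - 1) *\<^sub>R u) \<le> 1" for a b
    proof -
      obtain p where p1: "norm p = 1" and p2: "norm (p - u) = 1" and p3: "a * m \<le> norm (p - (1/2) *\<^sub>R u)"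
        using witness[OF u0 m0 orth' a0 n1 n2] by blast
      show ?thesis using delta_le[OF p1 p2] p3 by (simp add: dt_def t_def)
    qed
    show "c + dt \<le> r"
    proof (cases "c \<le> r")
      case False
      then have rc: "r < c" by simp
      show ?thesis
      proof (cases "c \<le> 1")
        case True
        have c0': "c > 0" using cc0 c00 by simp
        have k: "(1 - c) * (1/c) + 1 = 1/c" using c0' by (simp add: field_simps)
        have "(1 - c) *\<^sub>R ((1/c) *\<^sub>R x) + (x + u) = ((1 - c) * (1/c) + 1) *\<^sub>R x + u"
          by (simp only: scaleR_scaleR scaleR_add_left scaleR_one add.assoc)
        then have eq1: "(1/c) *\<^sub>R x + 1 *\<^sub>R u = (1 - c) *\<^sub>R ((1/c) *\<^sub>R x) + (x + u)"
          using k by simp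
        have "norm ((1 - c) *\<^sub>R ((1/c) *\<^sub>R x) + (x + u)) \<le> (1 - c) * 1 + r"
          using norm_triangle_ineq[of "(1 - c) *\<^sub>R ((1/c) *\<^sub>R x)" "x + u"] True c0'
          by (simp add: r_def c_def[symmetric])
        then have n1: "norm ((1/c) *\<^sub>R x + 1 *\<^sub>R u) \<le> 1" unfolding eq1 by (rule order_trans) (use rc in simp)
        have n2: "norm ((1/c) *\<^sub>R x + (1 - 1) *\<^sub>R u) \<le> 1" using c0' by (simp add: c_def)
        have "dt \<le> 1 - (1/c) * m" using wit[OF _ n1 n2] c0' by simp
        also have "\<dots> = e / c" using c0' by (simp add: m_def field_simps)
        also have "\<dots> \<le> e / c0" using c0' cc0 e0 c00 by (intro divide_left_mono) auto
        also have "\<dots> \<le> dt / 2" using E2 c00 by (simp add: field_simps)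
        finally show ?thesis using dt0 by simp
      next
        case False
        then have c1: "c > 1" by simp
        have t2': "t < 2" using t2 by (simp add: t_def)
        define \<theta> where "\<theta> = e / (e + 1 - t/2)"
        have den: "e + 1 - t/2 > 0" using e0 t2' by simp
        have th0: "0 \<le> \<theta>" and th1: "\<theta> \<le> 1" using e0 den t2' by (simp_all add: \<theta>_def field_simps)
        have thd: "\<theta> * (e + 1 - t/2) = e" using den by (simp add: \<theta>_def)
        have eqp0: "(1 - \<theta>) *\<^sub>R (x + u) + (\<theta>/2) *\<^sub>R u = (1 - \<theta>) *\<^sub>R x + ((1 - \<theta>) + \<theta>/2) *\<^sub>R u"
          by (simp only: scaleR_add_right scaleR_add_left add.assoc)
        have "(1 - \<theta>) + \<theta>/2 = 1 - \<theta>/2" by simp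
        then have eqp: "(1 - \<theta>) *\<^sub>R x + (1 - \<theta>/2) *\<^sub>R u = (1 - \<theta>) *\<^sub>R (x + u) + (\<theta>/2) *\<^sub>R u"
          using eqp0 by metis
        have eqq: "(1 - \<theta>) *\<^sub>R x + (1 - \<theta>/2 - 1) *\<^sub>R u = (1 - \<theta>) *\<^sub>R x + (- (\<theta>/2)) *\<^sub>R u"
          by simp
        have "norm ((1 - \<theta>) *\<^sub>R (x + u) + (\<theta>/2) *\<^sub>R u) \<le> (1 - \<theta>) * r + (\<theta>/2) * t"
          using norm_triangle_ineq[of "(1 - \<theta>) *\<^sub>R (x + u)" "(\<theta>/2) *\<^sub>R u"] th0 th1
          by (simp add: r_def t_def)
        also have "\<dots> \<le> (1 - \<theta>) * 1 + \<theta> * 1"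
          using r1' th0 th1 t2' by (intro add_mono mult_left_mono) (auto simp: mult_left_mono)
        finally have n1: "norm ((1 - \<theta>) *\<^sub>R x + (1 - \<theta>/2) *\<^sub>R u) \<le> 1" unfolding eqp by simp
        have "norm ((1 - \<theta>) *\<^sub>R x + (- (\<theta>/2)) *\<^sub>R u) \<le> (1 - \<theta>) * c + (\<theta>/2) * t"
          using norm_triangle_ineq[of "(1 - \<theta>) *\<^sub>R x" "(- (\<theta>/2)) *\<^sub>R u"] th0 th1
          by (simp add: c_def t_def)
        also have "\<dots> \<le> (1 - \<theta>) * (1 + e) + (\<theta>/2) * t"
          using cre r1' th0 th1 by (intro add_mono mult_left_mono) auto
        also have "\<dots> = 1 + e - \<theta> * (e + 1 - t/2)" by (simp add: algebra_simps)
        also have "\<dots> = 1" using thd by simp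
        finally have n2: "norm ((1 - \<theta>) *\<^sub>R x + (1 - \<theta>/2 - 1) *\<^sub>R u) \<le> 1" unfolding eqq .
        have "dt \<le> 1 - (1 - \<theta>) * m" using wit[OF _ n1 n2] th1 by simp
        also have "\<dots> \<le> 1 - (1 - \<theta>) * (1 - e)"
          using c1 th1 by (intro diff_left_mono mult_left_mono) (auto simp: m_def)
        also have "\<dots> \<le> \<theta> + e" using th0 e0 by (simp add: algebra_simps)
        finally have s1: "dt \<le> \<theta> + e" .
        have s2: "\<theta> \<le> e / (1 - t/2)" unfolding \<theta>_def using e0 t2' by (intro divide_left_mono) auto
        have s3: "e / (1 - t/2) \<le> dt / 4" using E4 t2' by (simp add: field_simps)
        have "dt * (1 - t/2) \<le> dt" using dt0 t0 by (simp add: mult_left_le)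
        then have s4: "e \<le> dt / 4" using E4 by linarith
        have "dt \<le> dt / 4 + dt / 4" using s1 s2 s3 s4 by linarith
        moreover
        ultimately show ?thesis using dt0 by simp
      qed
    next
      case True
      define D where "D = r - c"
      have D0: "D \<ge> 0" using True by (simp add: D_def)
      have c0': "c > 0" using cc0 c00 by simp
      have rpos: "r > 0" using True c0' by simp
      define \<alpha> where "\<alpha> = D / (2 * r)"
      have al0: "0 \<le> \<alpha>" using D0 rpos by (simp add: \<alpha>_def)
      have alr: "\<alpha> * (2 * r) = D" using rpos by (simp add: \<alpha>_def)
      have Dr: "D \<le> r" using c0' by (simp add: D_def)
      have "\<alpha> \<le> r / (2 * r)" unfolding \<alpha>_def using Dr rpos by (intro divide_right_mono) auto
      then have al1: "\<alpha> \<le> 1/2" using rpos by simp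
      define \<nu> where "\<nu> = (1 - r + \<alpha> * D) / c"
      have nuc: "\<nu> * c = 1 - r + \<alpha> * D" using c0' by (simp add: \<nu>_def)
      have nu0: "\<nu> \<ge> 0" using r1' al0 D0 c0' unfolding \<nu>_def by simp
      have eq1: "(1 + \<nu>) *\<^sub>R x + (1 - \<alpha>) *\<^sub>R u = (1 - \<alpha>) *\<^sub>R (x + u) + (\<alpha> + \<nu>) *\<^sub>R x"
        by (simp add: algebra_simps)
      have eq2: "(1 + \<nu>) *\<^sub>R x + (1 - \<alpha> - 1) *\<^sub>R u = (1 + \<nu> + \<alpha>) *\<^sub>R x - \<alpha> *\<^sub>R (x + u)"
        by (simp add: algebra_simps)
      have "norm ((1 - \<alpha>) *\<^sub>R (x + u) + (\<alpha> + \<nu>) *\<^sub>R x) \<le> (1 - \<alpha>) * r + (\<alpha> + \<nu>) * c"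
        using norm_triangle_ineq[of "(1 - \<alpha>) *\<^sub>R (x + u)" "(\<alpha> + \<nu>) *\<^sub>R x"] al0 al1 nu0
        by (simp add: r_def c_def)
      also have "\<dots> = 1" using nuc unfolding D_def by (simp add: algebra_simps)
      finally have n1: "norm ((1 + \<nu>) *\<^sub>R x + (1 - \<alpha>) *\<^sub>R u) \<le> 1" unfolding eq1 .
      have "norm ((1 + \<nu> + \<alpha>) *\<^sub>R x - \<alpha> *\<^sub>R (x + u)) \<le> (1 + \<nu> + \<alpha>) * c + \<alpha> * r"
        using norm_triangle_ineq4[of "(1 + \<nu> + \<alpha>) *\<^sub>R x" "\<alpha> *\<^sub>R (x + u)"] al0 nu0
        by (simp add: r_def c_def)
      also have "\<dots> = 1" using nuc alr unfolding D_def by (simp add: algebra_simps)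
      finally have n2: "norm ((1 + \<nu>) *\<^sub>R x + (1 - \<alpha> - 1) *\<^sub>R u) \<le> 1" unfolding eq2 .
      have "dt \<le> 1 - (1 + \<nu>) * m" using wit[OF _ n1 n2] nu0 by simp
      also have "\<dots> = D - \<alpha> * D + (1 + \<nu>) * e"
        using nuc unfolding m_def D_def by (simp add: algebra_simps)
      finally have dtb: "dt \<le> D - \<alpha> * D + (1 + \<nu>) * e" .
      have aDD: "\<alpha> * D \<le> D" using al1 D0 al0 by (simp add: mult_left_le_one_le)
      have "(1 + \<nu>) * c = c + \<nu> * c" by (simp add: algebra_simps)
      then have "(1 + \<nu>) * c \<le> 1" using nuc aDD unfolding D_def by linarith
      then have "(1 + \<nu>) \<le> 1 / c" using c0' by (simp add: field_simps)
      also have "\<dots> \<le> 1 / c0" using cc0 c00 by (intro divide_left_mono) auto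
      finally have nu1: "1 + \<nu> \<le> 1 / c0" .
      have nub: "(1 + \<nu>) * e \<le> e / c0" using mult_right_mono[OF nu1, of e] e0 by simp
      have ec0: "e / c0 \<le> dt / 2" and ec1: "e / c0 \<le> dt^2 / 8" using E2 E3 c00 by (simp_all add: field_simps)
      have aD: "\<alpha> * D \<ge> D^2 / 2"
      proof -
        have "\<alpha> * D = D^2 / (2 * r)" by (simp add: \<alpha>_def power2_eq_square)
        moreover have "D^2 / 2 \<le> D^2 / (2 * r)" using rpos r1' by (intro divide_left_mono) auto
        ultimately show ?thesis by simp
      qed
      have "D \<ge> dt / 2"
      proof (rule ccontr)
        assume "\<not> D \<ge> dt / 2"
        then have "D < dt/2" by simp
        moreover have "\<alpha> * D \<ge> 0" using al0 D0 by simp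
        ultimately show False using dtb nub ec0 by linarith
      qed
      then have "D^2 \<ge> (dt/2)^2" using dt0 by (intro power_mono) auto
      then have "\<alpha> * D \<ge> dt^2 / 8" using aD by (simp add: power_divide)
      then have "dt \<le> D" using dtb nub ec1 by linarith
      then show ?thesis by (simp add: D_def)
    qed
  qed
qed

lemma two_case:
  fixes x u :: "'a::real_normed_vector"
  assumes t2: "norm u = 2" and r1: "norm (x + u) \<le> 1"
    and orth: "\<forall>\<rho>. norm x - e \<le> norm (x + \<rho> *\<^sub>R u)"
    and d1: "modulus_convexity 1 TYPE('a) > 0"
    and e0: "0 < e" and e1: "e \<le> 1/2" and e2: "e \<le> modulus_convexity 1 TYPE('a) / 4"
  shows False
proof -
  define d where "d = modulus_convexity 1 TYPE('a)"
  define c where "c = norm x"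
  define r where "r = norm (x + u)"
  define v where "v = (1/2) *\<^sub>R u"
  have nv: "norm v = 1" using t2 by (simp add: v_def)
  have v0: "v \<noteq> 0" using nv by auto
  have tri: "2 \<le> r + c" unfolding r_def c_def using t2
    norm_triangle_ineq4[of "x + u" x] by simp
  have cre: "c \<le> r + e" using orth[rule_format, of 1] by (simp add: c_def r_def)
  have r1': "r \<le> 1" using r1 by (simp add: r_def)
  have c1: "c \<ge> 1" using tri r1' by simp
  define m where "m = c - e"
  have m0: "m > 0" using c1 e1 by (simp add: m_def)
  have orth': "\<forall>\<rho>. m \<le> norm (x + \<rho> *\<^sub>R v)"
  proof
    fix \<rho>
    have "x + \<rho> *\<^sub>R v = x + (\<rho>/2) *\<^sub>R u" by (simp add: v_def)
    then show "m \<le> norm (x + \<rho> *\<^sub>R v)" using orth[rule_format, of "\<rho>/2"] by (simp add: m_def c_def)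
  qed
  define \<theta> where "\<theta> = e / (1/2 + e)"
  have th0: "0 \<le> \<theta>" and th1: "\<theta> \<le> 1" using e0 by (simp_all add: \<theta>_def field_simps)
  have thd: "\<theta> * (1/2 + e) = e" using e0 by (simp add: \<theta>_def)
  have th2: "\<theta> \<le> 2 * e" using e0 by (simp add: \<theta>_def field_simps)
  have eqp0: "(1 - \<theta>) *\<^sub>R (x + v) + (\<theta>/2) *\<^sub>R v = (1 - \<theta>) *\<^sub>R x + ((1 - \<theta>) + \<theta>/2) *\<^sub>R v"
    by (simp only: scaleR_add_right scaleR_add_left add.assoc)
  have "(1 - \<theta>) + \<theta>/2 = 1 - \<theta>/2" by simp
  then have eqp: "(1 - \<theta>) *\<^sub>R x + (1 - \<theta>/2) *\<^sub>R v = (1 - \<theta>) *\<^sub>R (x + v) + (\<theta>/2) *\<^sub>R v"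
    using eqp0 by metis
  have hx: "(1/2) *\<^sub>R x + (1/2) *\<^sub>R x = x"
    by (metis field_sum_of_halves scaleR_add_left scaleR_one)
  have xv: "x + v = (1/2) *\<^sub>R (x + u) + (1/2) *\<^sub>R x"
  proof -
    have "(1/2) *\<^sub>R (x + u) + (1/2) *\<^sub>R x = ((1/2) *\<^sub>R x + (1/2) *\<^sub>R x) + (1/2) *\<^sub>R u"
      by (simp only: scaleR_add_right add_ac)
    then show ?thesis unfolding v_def hx by simp
  qed
  have "norm (x + v) \<le> (1/2) * r + (1/2) * c"
    unfolding xv using norm_triangle_ineq[of "(1/2) *\<^sub>R (x + u)" "(1/2) *\<^sub>R x"]
    by (simp add: r_def c_def)
  also have "\<dots> \<le> (1/2) * 1 + (1/2) * (1 + e)"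
  proof -
    have "c \<le> 1 + e" using cre r1' by linarith
    then show ?thesis using r1' by (intro add_mono mult_left_mono) auto
  qed
  also have "\<dots> = 1 + e/2" by (simp add: field_simps)
  finally have nxv: "norm (x + v) \<le> 1 + e/2" .
  have "norm ((1 - \<theta>) *\<^sub>R (x + v) + (\<theta>/2) *\<^sub>R v) \<le> norm ((1 - \<theta>) *\<^sub>R (x + v)) + norm ((\<theta>/2) *\<^sub>R v)"
    by (rule norm_triangle_ineq)
  also have "\<dots> = (1 - \<theta>) * norm (x + v) + \<theta>/2" using th0 th1 nv by simp
  also have "\<dots> \<le> (1 - \<theta>) * (1 + e) + \<theta>/2"
    using nxv th1 e0 by (intro add_mono mult_left_mono order_refl) auto
  also have "\<dots> = 1 + e - \<theta> * (1/2 + e)" by (simp add: algebra_simps)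
  also have "\<dots> = 1" using thd by simp
  finally have n1: "norm ((1 - \<theta>) *\<^sub>R x + (1 - \<theta>/2) *\<^sub>R v) \<le> 1" unfolding eqp .
  have eqq: "(1 - \<theta>) *\<^sub>R x + (1 - \<theta>/2 - 1) *\<^sub>R v = (1 - \<theta>) *\<^sub>R x + (- (\<theta>/2)) *\<^sub>R v"
    by simp
  have "norm ((1 - \<theta>) *\<^sub>R x + (- (\<theta>/2)) *\<^sub>R v) \<le> norm ((1 - \<theta>) *\<^sub>R x) + norm ((- (\<theta>/2)) *\<^sub>R v)"
    by (rule norm_triangle_ineq)
  also have "\<dots> = (1 - \<theta>) * c + \<theta>/2" using th0 th1 nv by (simp add: c_def)
  also have "\<dots> \<le> (1 - \<theta>) * (1 + e) + \<theta>/2"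
    using cre r1' th1 by (intro add_mono mult_left_mono order_refl) auto
  also have "\<dots> = 1 + e - \<theta> * (1/2 + e)" by (simp add: algebra_simps)
  also have "\<dots> = 1" using thd by simp
  finally have n2: "norm ((1 - \<theta>) *\<^sub>R x + (1 - \<theta>/2 - 1) *\<^sub>R v) \<le> 1" unfolding eqq .
  have a0: "0 \<le> 1 - \<theta>" using th1 by simp
  obtain p where p1: "norm p = 1" and p2: "norm (p - v) = 1" and p3: "(1 - \<theta>) * m \<le> norm (p - (1/2) *\<^sub>R v)"
    using witness[OF v0 m0 orth' a0 n1 n2] by blast
  have "d \<le> 1 - (1 - \<theta>) * m" using delta_le[OF p1 p2] p3 nv by (simp add: d_def)
  also have "\<dots> \<le> 1 - (1 - \<theta>) * (1 - e)"
    using c1 a0 unfolding m_def by (intro diff_left_mono mult_left_mono) auto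
  also have "\<dots> \<le> \<theta> + e" using th0 e0 by (simp add: algebra_simps)
  finally have "d \<le> \<theta> + e" .
  then have "d \<le> 3 * e" using th2 by linarith
  moreover have "e \<le> d / 4" using e2 by (simp add: d_def)
  moreover have "d > 0" using d1 by (simp add: d_def)
  ultimately show False by linarith
qed

theorem lemma3p7:
  fixes uk :: "nat \<Rightarrow> 'a::banach" and u :: 'a
  assumes dim2: "\<exists>x y :: 'a. x \<noteq> 0 \<and> (\<forall>c. y \<noteq> c *\<^sub>R x)"
    and uc: "uniformly_convex TYPE('a)"
    and conv: "delta_conv uk u"
    and bnd: "\<And>k. norm (uk k) \<le> 1"
  shows "norm u < 2 \<and>
    (\<forall>\<^sub>F k in sequentially. norm (uk k) \<ge> norm (uk k - u) + modulus_convexity (norm u) TYPE('a))"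
proof (cases "u = 0")
  case True
  obtain x0 :: 'a where x0: "x0 \<noteq> 0" using dim2 by blast
  define p where "p = (1 / norm x0) *\<^sub>R x0"
  have p1: "norm p = 1" using x0 by (simp add: p_def)
  have "modulus_convexity (norm (0::'a)) TYPE('a) \<le> 1 - norm (p - (1/2) *\<^sub>R (0::'a))"
    by (rule delta_le) (use p1 in simp_all)
  then have "modulus_convexity (norm u) TYPE('a) \<le> 0" using p1 True by simp
  then show ?thesis using True by simp
next
  case False
  note u0 = False
  have ev: "eventually (\<lambda>k. \<forall>\<rho>. norm (uk k - u) - e \<le> norm (uk k - u + \<rho> *\<^sub>R u)) sequentially"
    if "e > 0" for e
    using orth_ev[OF conv bnd u0 that] .
  have get: "\<exists>k. \<forall>\<rho>. norm (uk k - u) - e \<le> norm (uk k - u + \<rho> *\<^sub>R u)" if "e > 0" for e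
    using ev[OF that] by (auto simp: eventually_sequentially)
  have xu: "uk k - u + u = uk k" for k by simp
  have tle: "norm u \<le> 2"
  proof (rule field_le_epsilon)
    fix e :: real assume e0: "e > 0"
    obtain k where hk: "\<forall>\<rho>. norm (uk k - u) - e \<le> norm (uk k - u + \<rho> *\<^sub>R u)" using get[OF e0] by blast
    have "norm (uk k - u) - e \<le> norm (uk k)" using hk[rule_format, of 1] by simp
    moreover have "norm u \<le> norm (uk k) + norm (uk k - u)"
      using norm_triangle_ineq4[of "uk k" "uk k - u"] by simp
    ultimately show "norm u \<le> 2 + e" using bnd[of k] by linarith
  qed
  have tne: "norm u \<noteq> 2"
  proof
    assume t2: "norm u = 2"
    define d1 where "d1 = modulus_convexity 1 TYPE('a)"
    have d10: "d1 > 0" using uc by (simp add: uniformly_convex_def d1_def)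
    define e where "e = min (1/2) (d1/4)"
    have e0: "e > 0" using d10 by (simp add: e_def)
    obtain k where hk: "\<forall>\<rho>. norm (uk k - u) - e \<le> norm (uk k - u + \<rho> *\<^sub>R u)" using get[OF e0] by blast
    show False
      by (rule two_case[OF t2 _ hk]) (use bnd[of k] d10 e0 in \<open>auto simp: e_def d1_def\<close>)
  qed
  have t2: "norm u < 2" using tle tne by simp
  define dt where "dt = modulus_convexity (norm u) TYPE('a)"
  define t where "t = norm u"
  have t0: "t > 0" using u0 by (simp add: t_def)
  have dt0: "dt > 0" using uc t0 tle by (simp add: uniformly_convex_def dt_def t_def)
  have dth: "dt \<le> t / 2" using delta_half[OF dim2 u0 tle] by (simp add: dt_def t_def)
  define e where "e = min (min (t/8) ((t/4) * dt / 2)) (min ((t/4) * dt^2 / 8) (dt * (1 - t/2) / 4))"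
  have t2': "t < 2" using t2 by (simp add: t_def)
  have e0: "e > 0" using t0 dt0 t2' by (simp add: e_def)
  have "eventually (\<lambda>k. norm (uk k - u) + dt \<le> norm (uk k)) sequentially"
    using ev[OF e0]
  proof (rule eventually_mono)
    fix k assume hk: "\<forall>\<rho>. norm (uk k - u) - e \<le> norm (uk k - u + \<rho> *\<^sub>R u)"
    have "norm (uk k - u) + modulus_convexity (norm u) TYPE('a) \<le> norm (uk k - u + u)"
      by (rule main_step[OF u0 t2 _ hk]) (use bnd[of k] dt0 dth e0 in \<open>auto simp: e_def dt_def t_def\<close>)
    then show "norm (uk k - u) + dt \<le> norm (uk k)" by (simp add: dt_def)
  qed
  then show ?thesis using t2 by (simp add: dt_def)
qed

end
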